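(* Fix $\theta\in\mathbb{R}$ (playing the role of $at$). There exists $C>0$ such that for every grid size $N\in\mathbb{N}$ there exists a ReLU FNO $\mathcal{N}^{\mathrm{FNO}}$ with $k_{\max}=1$, $d_v\le C$, depth $\le C$, size $\le C$ such that \[ \sup_{h,w,\xi}\sup_{x\in\mathbb{T}}\big|\mathcal{N}^{\mathrm{FNO}}(\bar u)(x)-\sin(w/2)\cos(x-\xi-\theta)\big|\le\frac CN, \] where $\bar u=h\,1_{[-w/2,w/2]}(\cdot-\xi)$ and the supremum is over $h\in[\underline h,\overline h]$, $w\in[\underline w,\overline w]$, $\xi\in[0,2\pi]$.
   Context: $\mathbb{T}=\mathbb{R}/2\pi\mathbb{Z}$; fixed $0<\underline h\le\overline h$, $0<\underline w\le\overline w<2\pi$; $1_{[-w/2,w/2]}$ is periodized. FNO with grid size $N$: $x_j=2\pi j/N$, $\mathcal{F}_Nv(k)=\frac1N\sum_{j=1}^Nv(x_j)e^{-ikx_j}$; an FNO with lifting dimension $d_v$, cut-off $k_{\max}$, depth $L$, ReLU $\sigma$ is $Q\circ\mathcal{L}_L\circ\dots\circ\mathcal{L}_1\circ R$, $(R\bar u)(x)=R(\bar u(x),x)$ ($R$ a shallow ReLU network into $\mathbb{R}^{d_v}$), $(\mathcal{L}_\ell v)(x)=\sigma(W_\ell v(x)+b_\ell(x)+\sum_{|k|\le k_{\max}}P_\ell(k)\mathcal{F}_Nv(k)e^{ikx})$ with $W_\ell\in\mathbb{R}^{d_v\times d_v}$, $P_\ell(k)\in\mathbb{C}^{d_v\times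 d_v}$, real bias $b_\ell(x)=\sum_{|k|\le k_{\max}}\hat b_\ell(k)e^{ikx}$, $Q$ linear pointwise; outputs are defined for all $x\in\mathbb{T}$. Depth $=L$; size = number of tunable parameters. *)

theory Defs
  imports Complex_Main
begin

definition relu :: "real \<Rightarrow> real" where
  "relu t = max 0 t"

definition per_ind :: "real \<Rightarrow> real \<Rightarrow> real" where
  "per_ind w y = (if \<exists>k::int. \<bar>y - 2 * pi * of_int k\<bar> \<le> w / 2 then 1 else 0)"

definition box_input :: "real \<Rightarrow> real \<Rightarrow> real \<Rightarrow> real \<Rightarrow> real" where
  "box_input h w xi x = h * per_ind w (x - xi)"

text \<open>Vectors in R^dv are
  functions nat => real (indices < dv), matrices nat => nat => _.
  Lifting R is a shallow ReLU network (one hidden layer of width r_width)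
  R(u,x) = RB * relu(RA * (u,x) + Rc) + Rd.
  Layer l (l < depth) has W l, Fourier multipliers P l k (|k| <= kmax) and
  bias Fourier coefficients bhat l k; Q is a linear functional on R^dv.\<close>
record fno =
  dv :: nat
  kmax :: nat
  depth :: nat
  r_width :: nat
  RA :: "nat \<Rightarrow> nat \<Rightarrow> real"
  Rc :: "nat \<Rightarrow> real"
  RB :: "nat \<Rightarrow> nat \<Rightarrow> real"
  Rd :: "nat \<Rightarrow> real"
  Wm :: "nat \<Rightarrow> nat \<Rightarrow> nat \<Rightarrow> real"
  Pm :: "nat \<Rightarrow> int \<Rightarrow> nat \<Rightarrow> nat \<Rightarrow> complex"
  bhat :: "nat \<Rightarrow> int \<Rightarrow> nat \<Rightarrow> complex"
  Qv :: "nat \<Rightarrow> real"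

text \<open>Number of tunable real parameters (complex entries count twice).\<close>
definition fno_size :: "fno \<Rightarrow> nat" where
  "fno_size F =
     3 * r_width F + dv F * (r_width F + 1)
   + depth F * (dv F * dv F + 2 * (2 * kmax F + 1) * dv F * dv F + 2 * (2 * kmax F + 1) * dv F)
   + dv F"

definition fno_lift :: "fno \<Rightarrow> (real \<Rightarrow> real) \<Rightarrow> real \<Rightarrow> nat \<Rightarrow> real" where
  "fno_lift F u x i =
     (\<Sum>j<r_width F. RB F i j * relu (RA F j 0 * u x + RA F j 1 * x + Rc F j)) + Rd F i"

definition dft :: "nat \<Rightarrow> (real \<Rightarrow> real) \<Rightarrow> int \<Rightarrow> complex" where
  "dft N g k = (1 / of_nat N) *
     (\<Sum>j=1..N. complex_of_real (g (2 * pi * real j / real N)) * cis (- (of_int k * (2 * pi * real j / real N))))"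

text \<open>Fourier layer l (real part taken of the Fourier terms; bias is real).\<close>
definition fno_layer :: "fno \<Rightarrow> nat \<Rightarrow> nat \<Rightarrow> (real \<Rightarrow> nat \<Rightarrow> real) \<Rightarrow> real \<Rightarrow> nat \<Rightarrow> real" where
  "fno_layer F N l v x i =
     relu ((\<Sum>j<dv F. Wm F l i j * v x j)
       + Re (\<Sum>k\<in>{- int (kmax F)..int (kmax F)}. bhat F l k i * cis (of_int k * x))
       + Re (\<Sum>k\<in>{- int (kmax F)..int (kmax F)}. \<Sum>j<dv F.
               Pm F l k i j * dft N (\<lambda>y. v y j) k * cis (of_int k * x)))"

fun fno_layers :: "fno \<Rightarrow> nat \<Rightarrow> nat \<Rightarrow> (real \<Rightarrow> nat \<Rightarrow> real) \<Rightarrow> real \<Rightarrow> nat \<Rightarrow> real" where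
  "fno_layers F N 0 v = v"
| "fno_layers F N (Suc l) v = fno_layer F N l (fno_layers F N l v)"

definition fno_eval :: "fno \<Rightarrow> nat \<Rightarrow> (real \<Rightarrow> real) \<Rightarrow> real \<Rightarrow> real" where
  "fno_eval F N u x = (\<Sum>i<dv F. Qv F i * fno_layers F N (depth F) (fno_lift F u) x i)"

end

theory Submission
  imports Defs
begin


definition Fc :: "real \<Rightarrow> complex" where "Fc t = Complex (sin t) (cos t)"

lemma Fc_diff: "Fc p - Fc q = complex_of_real (2 * sin ((p - q)/2)) * cis (-((p+q)/2))"
proof -
  have 1: "sin p - sin q = 2 * sin ((p - q)/2) * cos ((p+q)/2)" by (rule sin_diff_sin)
  have 2: "cos p - cos q = 2 * sin ((p + q)/2) * sin ((q-p)/2)" by (rule cos_diff_cos)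
  have 3: "sin ((q-p)/2) = - sin ((p-q)/2)" by (metis minus_diff_eq minus_divide_left sin_minus)
  show ?thesis unfolding Fc_def using 1 2 3 by (simp add: complex_eq_iff)
qed

lemma Fc_lip: "cmod (Fc p - Fc q) \<le> \<bar>p - q\<bar>"
proof -
  have "cmod (Fc p - Fc q) = \<bar>2 * sin ((p - q)/2)\<bar>" by (simp add: Fc_diff norm_mult)
  also have "\<dots> \<le> 2 * \<bar>(p-q)/2\<bar>" using abs_sin_x_le_abs_x[of "(p-q)/2"] by simp
  finally show ?thesis by simp
qed

lemma telesc:
  fixes a b :: int and s :: real
  assumes "a - 1 \<le> b"
  shows "complex_of_real (2 * sin (s/2)) * (\<Sum>m\<in>{a..b}. cis (-(of_int m * s)))
        = Fc (of_int b * s + s/2) - Fc (of_int a * s - s/2)"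
  using assms
proof (induction b rule: int_ge_induct)
  case base
  have "{a..a-1} = {}" by auto
  moreover have "of_int (a - 1) * s + s/2 = of_int a * s - s/2" by (simp add: algebra_simps)
  ultimately show ?case by (simp only: sum.empty mult_zero_right diff_self)
next
  case (step b)
  have "{a..b+1} = insert (b+1) {a..b}" using step.hyps by auto
  hence "(\<Sum>m\<in>{a..b+1}. cis (-(of_int m * s))) = cis (-(of_int (b+1) * s)) + (\<Sum>m\<in>{a..b}. cis (-(of_int m * s)))"
    by simp
  moreover have "Fc (of_int (b+1) * s + s/2) - Fc (of_int b * s + s/2) = complex_of_real (2 * sin (s/2)) * cis (-(of_int (b+1) * s))"
    by (simp add: Fc_diff algebra_simps add_divide_distrib)
  ultimately show ?case using step.IH by (simp add: algebra_simps)
qed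

lemma sin_lower: "0 \<le> (x::real) \<Longrightarrow> x - x^3/6 \<le> sin x"
proof -
  have "\<bar>sin x - (\<Sum>m<3. sin_coeff m * x ^ m)\<bar> \<le> inverse (fact 3) * \<bar>x\<bar> ^ 3" by (rule Maclaurin_sin_bound)
  moreover have "(\<Sum>m<3. sin_coeff m * x ^ m) = x" by (simp add: eval_nat_numeral sin_coeff_def)
  moreover assume "0 \<le> x"
  ultimately have "\<bar>sin x - x\<bar> \<le> x^3/6" by (simp add: eval_nat_numeral)
  thus ?thesis by linarith
qed



lemma reindex:
  fixes N :: nat and a b :: int and P :: "int \<Rightarrow> bool" and g :: "int \<Rightarrow> complex"
  assumes N: "N > 0" and ab: "b - a < int N"
    and P: "\<And>j. P j \<longleftrightarrow> (\<exists>k. a \<le> j - k * int N \<and> j - k * int N \<le> b)"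
    and g: "\<And>m k. g (m + k * int N) = g m"
  shows "(\<Sum>j\<in>{1..int N}. if P j then g j else 0) = (\<Sum>m\<in>{a..b}. g m)"
proof -
  define S where "S = {j\<in>{1..int N}. P j}"
  define \<phi> where "\<phi> m = (m - 1) mod int N + 1" for m
  have phi_eq: "\<phi> m = m + (- ((m - 1) div int N)) * int N" for m
    unfolding \<phi>_def by (simp add: mod_div_mult_eq[symmetric] algebra_simps minus_div_mult_eq_mod[symmetric])
  have 1: "(\<Sum>j\<in>{1..int N}. if P j then g j else 0) = (\<Sum>j\<in>S. g j)"
    unfolding S_def by (simp add: sum.inter_filter[symmetric])
  have bij: "bij_betw \<phi> {a..b} S"
  proof (rule bij_betw_imageI)
    show "inj_on \<phi> {a..b}"
    proof (rule inj_onI)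
      fix m m' assume m: "m \<in> {a..b}" and m': "m' \<in> {a..b}" and e: "\<phi> m = \<phi> m'"
      hence "(m - 1) mod int N = (m' - 1) mod int N" unfolding \<phi>_def by simp
      hence "int N dvd (m - m')" by (metis mod_eq_dvd_iff diff_diff_eq2 diff_right_commute diff_add_cancel)
      then obtain t where t: "m - m' = int N * t" by (auto elim: dvdE)
      have "\<bar>m - m'\<bar> < int N" using m m' ab by auto
      have "t = 0"
      proof (rule ccontr)
        assume "t \<noteq> 0"
        hence "int N * 1 \<le> int N * \<bar>t\<bar>" by (intro mult_left_mono) auto
        moreover have "\<bar>m - m'\<bar> = int N * \<bar>t\<bar>" by (simp add: t abs_mult)
        ultimately show False using \<open>\<bar>m - m'\<bar> < int N\<close> by simp
      qed
      thus "m = m'" using t by simp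
    qed
    show "\<phi> ` {a..b} = S"
    proof
      show "\<phi> ` {a..b} \<subseteq> S"
      proof
        fix j assume "j \<in> \<phi> ` {a..b}"
        then obtain m where m: "m \<in> {a..b}" and j: "j = \<phi> m" by auto
        have "1 \<le> j \<and> j \<le> int N" proof -
          have "0 < int N" using N by simp
          hence "(m - 1) mod int N < int N" "0 \<le> (m - 1) mod int N" by simp_all
          thus ?thesis unfolding j \<phi>_def by simp
        qed
        moreover have "P j"
          unfolding P using m phi_eq[of m] j
          by (intro exI[of _ "- ((m - 1) div int N)"]) auto
        ultimately show "j \<in> S" unfolding S_def by auto
      qed
      show "S \<subseteq> \<phi> ` {a..b}"
      proof
        fix j assume "j \<in> S"
        then have j1: "1 \<le> j" "j \<le> int N" and "P j" unfolding S_def by auto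
        then obtain k where k: "a \<le> j - k * int N" "j - k * int N \<le> b" using P by blast
        have "(j - k * int N - 1) mod int N = (j - 1) mod int N"
          by (metis diff_diff_eq2 diff_right_commute mod_mult_self1 diff_add_cancel add.commute
              minus_mult_left mod_diff_right_eq mod_mult_self1_is_0 diff_zero)
        also have "\<dots> = j - 1" using j1 by (intro mod_pos_pos_trivial) auto
        finally have "\<phi> (j - k * int N) = j" unfolding \<phi>_def by simp
        thus "j \<in> \<phi> ` {a..b}" using k by force
      qed
    qed
  qed
  have "(\<Sum>m\<in>{a..b}. g m) = (\<Sum>m\<in>{a..b}. g (\<phi> m))"
    by (simp only: phi_eq g)
  also have "\<dots> = (\<Sum>j\<in>S. g j)"
    using sum.reindex_bij_betw[OF bij, of g] by simp
  finally show ?thesis using 1 by simp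
qed



lemma cis_period: "cis (x + 2 * pi * of_int k) = cis x"
proof -
  have "cis (x + 2 * pi * of_int k) = cis x * cis (2 * pi * of_int k)" using cis_mult[of x "2*pi*of_int k"] by simp
  also have "cis (2 * pi * of_int k) = 1" by (rule cis_multiple_2pi) simp
  finally show ?thesis by simp
qed

lemma dft_sum:
  fixes N :: nat and w \<xi> :: real
  assumes N: "N > 0"
  defines "s \<equiv> 2 * pi / real N"
  shows "dft N (\<lambda>y. per_ind w (y - \<xi>)) 1 = (1 / of_nat N) *
     (\<Sum>j\<in>{1..int N}. if (\<exists>k::int. \<bar>of_int j * s - \<xi> - 2 * pi * of_int k\<bar> \<le> w / 2)
        then cis (-(of_int j * s)) else 0)"
proof -
  have "(\<Sum>j\<in>{1..int N}. if (\<exists>k::int. \<bar>of_int j * s - \<xi> - 2 * pi * of_int k\<bar> \<le> w / 2)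
        then cis (-(of_int j * s)) else 0)
      = (\<Sum>j\<in>int ` {1..N}. if (\<exists>k::int. \<bar>of_int j * s - \<xi> - 2 * pi * of_int k\<bar> \<le> w / 2)
        then cis (-(of_int j * s)) else 0)" by (simp add: image_int_atLeastAtMost)
  also have "\<dots> = (\<Sum>j\<in>{1..N}. if (\<exists>k::int. \<bar>real j * s - \<xi> - 2 * pi * of_int k\<bar> \<le> w / 2)
        then cis (-(real j * s)) else 0)" by (subst sum.reindex) (auto simp: inj_on_def intro!: sum.cong)
  also have "\<dots> = (\<Sum>j=1..N. complex_of_real (per_ind w (2 * pi * real j / real N - \<xi>)) *
         cis (- (of_int 1 * (2 * pi * real j / real N))))"
  proof (rule sum.cong)
    fix j assume "j \<in> {1..N}"
    have e: "real j * s = 2 * pi * real j / real N" by (simp add: s_def)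
    show "(if (\<exists>k::int. \<bar>real j * s - \<xi> - 2 * pi * of_int k\<bar> \<le> w / 2)
        then cis (-(real j * s)) else 0) = complex_of_real (per_ind w (2 * pi * real j / real N - \<xi>)) *
         cis (- (of_int 1 * (2 * pi * real j / real N)))"
      unfolding e per_ind_def by simp
  qed simp
  finally show ?thesis unfolding dft_def by simp
qed



lemma dft_est:
  fixes N :: nat and w \<xi> :: real
  assumes N: "N \<ge> 2" and w0: "0 \<le> w" and w1: "w < 2 * pi"
  shows "cmod (complex_of_real pi * dft N (\<lambda>y. per_ind w (y - \<xi>)) 1
              - complex_of_real (sin (w/2)) * cis (-\<xi>)) \<le> 27 / real N"
proof -
  define s where "s = 2 * pi / real N"
  have Npos: "real N > 0" using N by simp
  have spos: "s > 0" unfolding s_def using Npos by simp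
  have Ns: "real N * s = 2 * pi" unfolding s_def using Npos by simp
  define a where "a = \<lceil>(\<xi> - w/2) / s\<rceil>"
  define b where "b = \<lfloor>(\<xi> + w/2) / s\<rfloor>"
  define P where "P j = (\<exists>k::int. \<bar>of_int j * s - \<xi> - 2 * pi * of_int k\<bar> \<le> w / 2)" for j :: int
  define T where "T = (\<Sum>m\<in>{a..b}. cis (-(of_int m * s)))"
  have a1: "(\<xi> - w/2) / s \<le> of_int a" "of_int a < (\<xi> - w/2) / s + 1" unfolding a_def by linarith+
  have b1: "of_int b \<le> (\<xi> + w/2) / s" "(\<xi> + w/2) / s < of_int b + 1" unfolding b_def by linarith+
  have a2: "\<xi> - w/2 \<le> of_int a * s" "of_int a * s < \<xi> - w/2 + s"
    using a1 spos by (simp_all add: pos_divide_le_eq pos_less_divide_eq divide_less_eq field_simps)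
  have b2: "of_int b * s \<le> \<xi> + w/2" "\<xi> + w/2 < of_int b * s + s"
    using b1 spos by (simp_all add: pos_le_divide_eq pos_divide_less_eq field_simps)
  have "of_int (b - a) * s < 2 * pi" using a2 b2 w1 by (simp add: algebra_simps)
  hence "of_int (b - a) * s < of_int (int N) * s" using Ns by (simp add: mult.commute)
  hence ab: "b - a < int N" using spos by (simp only: mult_less_cancel_right) auto
  have "of_int (a - 1) * s < of_int (b + 1) * s" using a2 b2 w0 by (simp add: algebra_simps)
  hence "a - 1 < b + 1" using spos by (simp only: mult_less_cancel_right) auto
  hence ab2: "a - 1 \<le> b" by simp
  have Pchar: "P j \<longleftrightarrow> (\<exists>k. a \<le> j - k * int N \<and> j - k * int N \<le> b)" for j
  proof -
    have "\<bar>of_int j * s - \<xi> - 2 * pi * of_int k\<bar> \<le> w / 2 \<longleftrightarrow> a \<le> j - k * int N \<and> j - k * int N \<le> b" for k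
    proof -
      have e: "of_int j * s - 2 * pi * of_int k = of_int (j - k * int N) * s"
        using Ns by (simp add: algebra_simps)
      define r where "r = j - k * int N"
      have "\<bar>of_int j * s - \<xi> - 2 * pi * of_int k\<bar> \<le> w / 2 \<longleftrightarrow> \<xi> - w/2 \<le> of_int r * s \<and> of_int r * s \<le> \<xi> + w/2"
      proof -
        have e2: "of_int j * s - \<xi> - 2 * pi * of_int k = of_int r * s - \<xi>" using e unfolding r_def by linarith
        show ?thesis unfolding e2 by (auto simp: abs_if split: if_splits)
      qed
      also have "\<dots> \<longleftrightarrow> (\<xi> - w/2)/s \<le> of_int r \<and> of_int r \<le> (\<xi> + w/2) / s"
        using spos by (simp add: pos_divide_le_eq pos_le_divide_eq)
      also have "\<dots> \<longleftrightarrow> a \<le> r \<and> r \<le> b" unfolding a_def b_def by (simp add: ceiling_le_iff le_floor_iff)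
      finally show ?thesis unfolding r_def .
    qed
    thus ?thesis unfolding P_def by simp
  qed
  have D: "dft N (\<lambda>y. per_ind w (y - \<xi>)) 1 = (1 / of_nat N) * T"
  proof -
    have "dft N (\<lambda>y. per_ind w (y - \<xi>)) 1 = (1 / of_nat N) * (\<Sum>j\<in>{1..int N}. if P j then cis (-(of_int j * s)) else 0)"
      unfolding P_def s_def using dft_sum[of N w \<xi>] N by simp
    also have "(\<Sum>j\<in>{1..int N}. if P j then cis (-(of_int j * s)) else 0) = T"
      unfolding T_def
    proof (rule reindex)
      show "0 < N" using N by simp
      show "b - a < int N" by (rule ab)
      show "P j = (\<exists>k. a \<le> j - k * int N \<and> j - k * int N \<le> b)" for j by (rule Pchar)
      show "cis (- (of_int (m + k * int N) * s)) = cis (- (of_int m * s))" for m k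
      proof -
        have "- (of_int (m + k * int N) * s) = - (of_int m * s) + 2 * pi * of_int (-k)"
          using Ns by (simp add: algebra_simps)
        thus ?thesis by (simp only: cis_period)
      qed
    qed
    finally show ?thesis .
  qed
  define \<sigma> where "\<sigma> = sin (s/2)"
  have tel: "complex_of_real (2 * \<sigma>) * T = Fc (of_int b * s + s/2) - Fc (of_int a * s - s/2)"
    unfolding T_def \<sigma>_def by (rule telesc[OF ab2])
  define E' where "E' = Fc (of_int b * s + s/2) - Fc (of_int a * s - s/2)"
  define E where "E = Fc (\<xi> + w/2) - Fc (\<xi> - w/2)"
  have EE: "E = complex_of_real (2 * sin (w/2)) * cis (-\<xi>)" unfolding E_def Fc_diff by simp
  have nE: "cmod E \<le> 2" unfolding EE by (simp add: norm_mult)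
  have dE: "cmod (E' - E) \<le> s"
  proof -
    have "E' - E = (Fc (of_int b * s + s/2) - Fc (\<xi> + w/2)) - (Fc (of_int a * s - s/2) - Fc (\<xi> - w/2))"
      unfolding E_def E'_def by simp
    hence "cmod (E' - E) \<le> cmod (Fc (of_int b * s + s/2) - Fc (\<xi> + w/2)) + cmod (Fc (of_int a * s - s/2) - Fc (\<xi> - w/2))"
      by (metis norm_triangle_ineq4)
    also have "\<dots> \<le> \<bar>of_int b * s + s/2 - (\<xi> + w/2)\<bar> + \<bar>of_int a * s - s/2 - (\<xi> - w/2)\<bar>"
      by (intro add_mono Fc_lip)
    also have "\<dots> \<le> s" using a2 b2 by (simp add: abs_le_iff)
    finally show ?thesis .
  qed
  have h: "s/2 = pi / real N" unfolding s_def by simp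
  have pi3: "2 \<le> pi" "pi < 4" using pi_ge_two pi_less_4 by auto
  have sig_up: "real N * \<sigma> \<le> pi"
  proof -
    have "\<sigma> \<le> s/2" unfolding \<sigma>_def using sin_x_le_x[of "s/2"] spos by simp
    thus ?thesis using Npos h by (simp add: field_simps)
  qed
  have sig_low: "pi - pi^3 / (6 * (real N)^2) \<le> real N * \<sigma>"
  proof -
    have "pi / real N - (pi / real N)^3 / 6 \<le> \<sigma>" unfolding \<sigma>_def h using sin_lower[of "pi / real N"] Npos by simp
    hence "real N * (pi / real N - (pi / real N)^3 / 6) \<le> real N * \<sigma>" using Npos by (simp add: mult_left_mono)
    moreover have "real N * (pi / real N - (pi / real N)^3 / 6) = pi - pi^3 / (6 * (real N)^2)"
      using Npos by (simp add: field_simps power2_eq_square power3_eq_cube)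
    ultimately show ?thesis by simp
  qed
  have N2: "(real N)^2 \<ge> 4"
  proof -
    have "real N \<ge> 2" using N by simp
    hence "2^2 \<le> (real N)^2" by (intro power_mono) auto
    thus ?thesis by simp
  qed
  have "pi^3 / (6 * (real N)^2) \<le> pi^3 / 24"
    using N2 N by (intro divide_left_mono) auto
  moreover have "pi - pi^3/24 \<ge> 1"
  proof -
    have "2^2 \<le> pi^2" using pi3 by (intro power_mono) auto
    hence "pi^2 + 4*pi - 8 \<ge> 0" using pi3 by simp
    hence "(4 - pi) * (pi^2 + 4*pi - 8) \<ge> 0" using pi3 by simp
    thus ?thesis by (simp add: power2_eq_square power3_eq_cube algebra_simps)
  qed
  ultimately have sig1: "real N * \<sigma> \<ge> 1" using sig_low by linarith
  define X where "X = complex_of_real pi * dft N (\<lambda>y. per_ind w (y - \<xi>)) 1 - complex_of_real (sin (w/2)) * cis (-\<xi>)"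
  have key: "complex_of_real (2 * real N * \<sigma>) * X = complex_of_real pi * (E' - E) + complex_of_real (pi - real N * \<sigma>) * E"
  proof -
    have "complex_of_real (2 * real N * \<sigma>) * X =
       complex_of_real pi * (complex_of_real (2 * \<sigma>) * T) - complex_of_real (real N * \<sigma>) * E"
      unfolding X_def D EE using Npos by (simp add: field_simps)
    thus ?thesis unfolding tel E'_def[symmetric] by (simp add: algebra_simps)
  qed
  have "2 * real N * \<sigma> * cmod X = cmod (complex_of_real pi * (E' - E) + complex_of_real (pi - real N * \<sigma>) * E)"
  proof -
    have sp: "\<sigma> > 0" unfolding \<sigma>_def h using N by (intro sin_gt_zero) (auto simp: field_simps)
    hence "cmod (complex_of_real (2 * real N * \<sigma>) * X) = 2 * real N * \<sigma> * cmod X" by (simp add: norm_mult)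
    thus ?thesis using key by simp
  qed
  also have "\<dots> \<le> pi * s + (pi - real N * \<sigma>) * 2"
  proof -
    have "cmod (complex_of_real pi * (E' - E)) \<le> pi * s" using dE by (simp add: norm_mult mult_left_mono)
    moreover have "cmod (complex_of_real (pi - real N * \<sigma>) * E) \<le> (pi - real N * \<sigma>) * 2"
    proof -
      have c0: "0 \<le> pi - real N * \<sigma>" using sig_up by simp
      have "cmod (complex_of_real (pi - real N * \<sigma>) * E) = (pi - real N * \<sigma>) * cmod E"
        using c0 by (simp only: norm_mult norm_of_real abs_of_nonneg)
      also have "\<dots> \<le> (pi - real N * \<sigma>) * 2" using c0 nE by (intro mult_left_mono)
      finally show ?thesis .
    qed
    ultimately show ?thesis by (meson add_mono norm_triangle_ineq order_trans)
  qed
  also have "\<dots> \<le> 2 * pi^2 / real N + pi^3 / (3 * real N)"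
  proof -
    have "pi * s = 2 * pi^2 / real N" unfolding s_def by (simp add: power2_eq_square)
    moreover have "pi^3 / (6 * (real N)^2) \<le> pi^3 / (6 * real N)"
      using N Npos by (intro divide_left_mono) (auto simp: power2_eq_square)
    ultimately show ?thesis using sig_low by simp
  qed
  also have "\<dots> \<le> 54 / real N"
  proof -
    have "pi^2 \<le> 4^2" "pi^3 \<le> 4^3" using pi3 by (intro power_mono; simp)+
    hence "6*pi^2 + pi^3 \<le> 162" by simp
    hence "(6*pi^2 + pi^3)/(3 * real N) \<le> 162 / (3 * real N)" using Npos by (intro divide_right_mono) auto
    moreover have "2*pi^2/real N + pi^3/(3*real N) = (6*pi^2 + pi^3)/(3 * real N)" using Npos by (simp add: field_simps)
    ultimately show ?thesis by simp
  qed
  finally have "2 * real N * \<sigma> * cmod X \<le> 54 / real N" .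
  moreover have "2 * cmod X \<le> 2 * real N * \<sigma> * cmod X"
    using mult_right_mono[OF sig1, of "cmod X"] by (simp add: mult.assoc)
  ultimately have "cmod X \<le> 27 / real N" by simp
  thus ?thesis unfolding X_def .
qed



lemma dft_est_all:
  fixes N :: nat and w \<xi> :: real
  assumes N: "N > 0" and w0: "0 \<le> w" and w1: "w < 2 * pi"
  shows "cmod (complex_of_real pi * dft N (\<lambda>y. per_ind w (y - \<xi>)) 1
              - complex_of_real (sin (w/2)) * cis (-\<xi>)) \<le> 27 / real N"
proof (cases "N \<ge> 2")
  case True thus ?thesis using dft_est w0 w1 by blast
next
  case False
  hence N1: "N = 1" using N by simp
  have pi4: "pi < 4" by (rule pi_less_4)
  have "cmod (dft N (\<lambda>y. per_ind w (y - \<xi>)) 1) \<le> 1"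
    unfolding N1 dft_def by (simp add: norm_mult per_ind_def)
  hence "cmod (complex_of_real pi * dft N (\<lambda>y. per_ind w (y - \<xi>)) 1) \<le> pi"
    by (simp add: norm_mult mult_left_le)
  moreover have "cmod (complex_of_real (sin (w/2)) * cis (-\<xi>)) \<le> 1" by (simp add: norm_mult)
  ultimately have "cmod (complex_of_real pi * dft N (\<lambda>y. per_ind w (y - \<xi>)) 1
              - complex_of_real (sin (w/2)) * cis (-\<xi>)) \<le> pi + 1"
    by (meson add_mono norm_triangle_ineq4 order_trans)
  thus ?thesis using pi4 N1 by simp
qed

definition theF :: "real \<Rightarrow> real \<Rightarrow> fno" where
  "theF hl \<theta> = \<lparr>dv = 2, kmax = 1, depth = 1, r_width = 2,
     RA = (\<lambda>j c. if c = 0 then 1 / hl else 0),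
     Rc = (\<lambda>j. if j = 0 then 0 else -1),
     RB = (\<lambda>i j. if i = 0 then (if j = 0 then 1 else -1) else 0),
     Rd = (\<lambda>i. 0),
     Wm = (\<lambda>l i j. 0),
     Pm = (\<lambda>l k i j. if k = 1 \<and> j = 0 then (if i = 0 then complex_of_real pi * cis (-\<theta>) else - (complex_of_real pi * cis (-\<theta>))) else 0),
     bhat = (\<lambda>l k i. 0),
     Qv = (\<lambda>i. if i = 0 then 1 else -1)\<rparr>"

lemma theF_size: "fno_size (theF hl \<theta>) = 54"
  by (simp add: theF_def fno_size_def)

lemma lift0:
  assumes "0 < hl" "hl \<le> h"
  shows "fno_lift (theF hl \<theta>) (box_input h w \<xi>) y 0 = per_ind w (y - \<xi>)"
proof -
  have "h / hl \<ge> 1" using assms by simp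
  thus ?thesis
    by (simp add: fno_lift_def theF_def box_input_def relu_def per_ind_def numeral_2_eq_2 lessThan_Suc)
qed

lemma sum_k: "{- int 1..int 1} = {-1, 0, 1::int}" by auto
lemma sum_k': "{- 1..1} = {-1, 0, 1::int}" by auto

lemma eval_theF:
  assumes "0 < hl" "hl \<le> h"
  shows "fno_eval (theF hl \<theta>) N (box_input h w \<xi>) x =
     Re (cis (x - \<theta>) * (complex_of_real pi * dft N (\<lambda>y. per_ind w (y - \<xi>)) 1))"
proof -
  define D where "D = dft N (\<lambda>y. per_ind w (y - \<xi>)) 1"
  have L: "(\<lambda>y. fno_lift (theF hl \<theta>) (box_input h w \<xi>) y 0) = (\<lambda>y. per_ind w (y - \<xi>))"
    using lift0[OF assms] by auto
  define c where "c = complex_of_real pi * cis (-\<theta>)"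
  define v where "v = fno_lift (theF hl \<theta>) (box_input h w \<xi>)"
  define V where "V = Re (c * D * cis x)"
  have gen: "fno_layer (theF hl \<theta>) N 0 v x i = relu (Re ((if i = 0 then c else - c) * D * cis x))" for i
  proof -
    have A: "(\<Sum>j<dv (theF hl \<theta>). Wm (theF hl \<theta>) 0 i j * v x j) = 0" by (simp add: theF_def)
    have B: "(\<Sum>k\<in>{- int (kmax (theF hl \<theta>))..int (kmax (theF hl \<theta>))}. bhat (theF hl \<theta>) 0 k i * cis (of_int k * x)) = 0"
      by (simp add: theF_def)
    have Ceq: "(\<Sum>k\<in>{- int (kmax (theF hl \<theta>))..int (kmax (theF hl \<theta>))}. \<Sum>j<dv (theF hl \<theta>).
               Pm (theF hl \<theta>) 0 k i j * dft N (\<lambda>y. v y j) k * cis (of_int k * x))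
             = (if i = 0 then c else - c) * D * cis x"
    proof -
      have "kmax (theF hl \<theta>) = 1" "dv (theF hl \<theta>) = 2" by (simp_all add: theF_def)
      moreover have "Pm (theF hl \<theta>) 0 k i j = (if k = 1 \<and> j = 0 then (if i = 0 then c else - c) else 0)" for k j
        by (simp add: theF_def c_def)
      moreover have "(\<lambda>y. v y 0) = (\<lambda>y. per_ind w (y - \<xi>))" unfolding v_def by (rule L)
      ultimately show ?thesis by (simp add: sum_k sum_k' numeral_2_eq_2 lessThan_Suc D_def)
    qed
    show ?thesis unfolding fno_layer_def A B Ceq by simp
  qed
  have l0: "fno_layer (theF hl \<theta>) N 0 v x 0 = relu V" using gen[of 0] unfolding V_def by simp
  have l1: "fno_layer (theF hl \<theta>) N 0 v x 1 = relu (- V)" using gen[of 1] unfolding V_def by simp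
  have "fno_eval (theF hl \<theta>) N (box_input h w \<xi>) x = relu V - relu (- V)"
  proof -
    have "dv (theF hl \<theta>) = 2" "depth (theF hl \<theta>) = 1" "Qv (theF hl \<theta>) 0 = 1" "Qv (theF hl \<theta>) 1 = -1"
      by (simp_all add: theF_def)
    thus ?thesis unfolding fno_eval_def v_def[symmetric] using l0 l1 by (simp add: numeral_2_eq_2 lessThan_Suc)
  qed
  also have "\<dots> = V" by (simp add: relu_def)
  also have "V = Re (cis (x - \<theta>) * (complex_of_real pi * D))"
  proof -
    have e1: "cis (-\<theta>) * cis x = cis (x - \<theta>)" using cis_mult[of "-\<theta>" x] by (simp add: add.commute)
    have "c * D * cis x = (cis (-\<theta>) * cis x) * (complex_of_real pi * D)"
      unfolding c_def by (simp add: algebra_simps)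
    hence "c * D * cis x = cis (x - \<theta>) * (complex_of_real pi * D)" unfolding e1 .
    thus ?thesis unfolding V_def by (simp only:)
  qed
  finally show ?thesis unfolding D_def .
qed


theorem mainTheorem11:
  fixes \<theta> hl hu wl wu :: real
  assumes "0 < hl" "hl \<le> hu" "0 < wl" "wl \<le> wu" "wu < 2 * pi"
  shows "\<exists>C>0. \<forall>N::nat. N > 0 \<longrightarrow>
           (\<exists>F::fno. kmax F = 1 \<and> real (dv F) \<le> C \<and> real (depth F) \<le> C
              \<and> real (fno_size F) \<le> C
              \<and> (\<forall>h\<in>{hl..hu}. \<forall>w\<in>{wl..wu}. \<forall>\<xi>\<in>{0..2*pi}. \<forall>x\<in>{0..2*pi}.
                   \<bar>fno_eval F N (box_input h w \<xi>) x - sin (w / 2) * cos (x - \<xi> - \<theta>)\<bar> \<le> C / real N))"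
proof (intro exI[of _ 100] conjI allI impI)
  fix N :: nat assume N: "N > 0"
  show "\<exists>F::fno. kmax F = 1 \<and> real (dv F) \<le> 100 \<and> real (depth F) \<le> 100
              \<and> real (fno_size F) \<le> 100
              \<and> (\<forall>h\<in>{hl..hu}. \<forall>w\<in>{wl..wu}. \<forall>\<xi>\<in>{0..2*pi}. \<forall>x\<in>{0..2*pi}.
                   \<bar>fno_eval F N (box_input h w \<xi>) x - sin (w / 2) * cos (x - \<xi> - \<theta>)\<bar> \<le> 100 / real N)"
  proof (intro exI[of _ "theF hl \<theta>"] conjI ballI)
    show "kmax (theF hl \<theta>) = 1" "real (dv (theF hl \<theta>)) \<le> 100" "real (depth (theF hl \<theta>)) \<le> 100"
      by (simp_all add: theF_def)
    show "real (fno_size (theF hl \<theta>)) \<le> 100" by (simp add: theF_size)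
    fix h w \<xi> x assume h: "h \<in> {hl..hu}" and w: "w \<in> {wl..wu}" and "\<xi> \<in> {0..2*pi}" "x \<in> {0..2*pi}"
    define D where "D = dft N (\<lambda>y. per_ind w (y - \<xi>)) 1"
    define Y where "Y = complex_of_real pi * D - complex_of_real (sin (w/2)) * cis (-\<xi>)"
    have ev: "fno_eval (theF hl \<theta>) N (box_input h w \<xi>) x = Re (cis (x - \<theta>) * (complex_of_real pi * D))"
      unfolding D_def by (rule eval_theF) (use assms h in auto)
    have tgt: "sin (w / 2) * cos (x - \<xi> - \<theta>) = Re (cis (x - \<theta>) * (complex_of_real (sin (w/2)) * cis (-\<xi>)))"
    proof -
      have "cis (x - \<theta>) * (complex_of_real (sin (w/2)) * cis (-\<xi>)) = complex_of_real (sin (w/2)) * cis (x - \<xi> - \<theta>)"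
        using cis_mult[of "x - \<theta>" "-\<xi>"] by (simp add: algebra_simps)
      note eq = this
      show ?thesis unfolding eq by simp
    qed
    have "\<bar>fno_eval (theF hl \<theta>) N (box_input h w \<xi>) x - sin (w / 2) * cos (x - \<xi> - \<theta>)\<bar>
        = \<bar>Re (cis (x - \<theta>) * Y)\<bar>" unfolding ev tgt Y_def by (simp add: algebra_simps)
    also have "\<dots> \<le> cmod (cis (x - \<theta>) * Y)" by (rule abs_Re_le_cmod)
    also have "\<dots> = cmod Y" by (simp add: norm_mult)
    also have "\<dots> \<le> 27 / real N" unfolding Y_def D_def
      by (rule dft_est_all) (use N assms w in auto)
    also have "\<dots> \<le> 100 / real N" using N by (simp add: divide_right_mono)
    finally show "\<bar>fno_eval (theF hl \<theta>) N (box_input h w \<xi>) x - sin (w / 2) * cos (x - \<xi> - \<theta>)\<bar> \<le> 100 / real N" .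
  qed
qed auto

end
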